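(* Let $G=(V,E)$ be an undirected graph without self-loops on $N$ vertices, with $V$ identified with $\{1,\ldots,N\}$, and let $\omega:E\to(0,\infty)$ be a weight function. Let $A=[a_{ij}]_{i,j=1}^N\in\mathbb{R}^{N\times N}$ be the real skew-symmetric matrix ($A^\top=-A$) with $a_{ij}\neq 0$ if and only if $\{i,j\}\in E$, and $a_{ij}=\sqrt{\omega(\{i,j\})}$ for $i<j$, $\{i,j\}\in E$. Let $x_{ij}$, $1\le i\le j\le N$, be $\binom{N+1}{2}$ independent real random variables with $\mathbb{E}\,x_{ij}=0$ and $\mathbb{E}\,x_{ij}^2=1$, and let $Y_A$ be the random skew-symmetric matrix $Y_A=[a_{ij}x_{\min(i,j)\max(i,j)}]_{i,j=1}^N$. Then for every $t\ge 0$: $$\mathbb{E}\det(\sqrt{t}I_N+Y_A)=\Phi(t,G_\omega)\ \text{ if } N \text{ is even},\qquad \mathbb{E}\det(\sqrt{t}I_N+Y_A)=\sqrt{t}\,\Phi(t,G_\omega)\ \text{ if } N \text{ is odd}.$$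
   Context: A $k$-matching of $G$ is a set of $k$ edges no two of which share a vertex. The weight of a matching $M$ is $\omega(M)=\prod_{e\in M}\omega(e)$. For $k\ge1$, $\phi(k,G_\omega)$ is the sum of $\omega(M)$ over all $k$-matchings $M$ of $G$ (zero if there are none), and $\phi(0,G_\omega)=1$. The weighted matching polynomial is $\Phi(t,G_\omega)=\sum_{k=0}^{n}\phi(k,G_\omega)t^{n-k}$ with $n=\lfloor N/2\rfloor$. $I_N$ is the $N\times N$ identity matrix. *)

theory Defs
  imports "HOL-Probability.Probability" "Jordan_Normal_Form.Determinant"
begin

text \<open>Vertices are 0..<N (order-preserving relabelling of 1..N); edges are
2-element sets of vertices; weights are given on edges.\<close>

definition matchings :: "nat set set \<Rightarrow> nat \<Rightarrow> nat set set set" where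
  "matchings E k = {M. M \<subseteq> E \<and> card M = k \<and>
      (\<forall>e\<in>M. \<forall>f\<in>M. e \<noteq> f \<longrightarrow> e \<inter> f = {})}"

definition phi_match :: "nat \<Rightarrow> nat set set \<Rightarrow> (nat set \<Rightarrow> real) \<Rightarrow> real" where
  "phi_match k E \<omega> = (if k = 0 then 1 else (\<Sum>M\<in>matchings E k. \<Prod>e\<in>M. \<omega> e))"

definition Phi_match :: "real \<Rightarrow> nat \<Rightarrow> nat set set \<Rightarrow> (nat set \<Rightarrow> real) \<Rightarrow> real" where
  "Phi_match t N E \<omega> = (\<Sum>k = 0..N div 2. phi_match k E \<omega> * t ^ (N div 2 - k))"

end

theory Submission imports Defs begin

definition NFp :: "nat \<Rightarrow> (nat \<Rightarrow> nat) \<Rightarrow> nat set" where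
  "NFp N p = {i. i < N \<and> p i \<noteq> i}"

definition mpp :: "nat \<Rightarrow> (nat \<Rightarrow> nat) \<Rightarrow> nat set set" where
  "mpp N p = (\<lambda>i. {i, p i}) ` NFp N p"

lemma edge_prod:
  fixes a :: "nat \<Rightarrow> nat \<Rightarrow> real"
  assumes weight_pos: "\<forall>e\<in>E. \<omega> e > 0"
    and skew: "\<forall>i<N. \<forall>j<N. a j i = - a i j"
    and entries: "\<forall>i<N. \<forall>j<N. i < j \<and> {i, j} \<in> E \<longrightarrow> a i j = sqrt (\<omega> {i, j})"
    and uv: "u < N" "v < N" "u \<noteq> v" "{u, v} \<in> E"
  shows "a u v * a v u = - \<omega> {u, v}"
proof (cases "u < v")
  case True
  have "a u v = sqrt (\<omega> {u, v})" using entries uv True by blast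
  moreover have "a v u = - a u v" using skew uv by blast
  moreover have "\<omega> {u, v} > 0" using weight_pos uv by blast
  ultimately show ?thesis by (simp add: power2_eq_square[symmetric])
next
  case False
  then have vu: "v < u" using uv by simp
  have "{v, u} = {u, v}" by auto
  then have "a v u = sqrt (\<omega> {u, v})" using entries uv vu by metis
  moreover have "a u v = - a v u" using skew uv by blast
  moreover have "\<omega> {u, v} > 0" using weight_pos uv by blast
  ultimately show ?thesis by (simp add: power2_eq_square[symmetric])
qed

lemma match_perm:
  fixes a :: "nat \<Rightarrow> nat \<Rightarrow> real"
  assumes graph: "E \<subseteq> {{i, j} | i j. i < N \<and> j < N \<and> i \<noteq> j}"
    and weight_pos: "\<forall>e\<in>E. \<omega> e > 0"
    and skew: "\<forall>i<N. \<forall>j<N. a j i = - a i j"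
    and entries: "\<forall>i<N. \<forall>j<N. i < j \<and> {i, j} \<in> E \<longrightarrow> a i j = sqrt (\<omega> {i, j})"
  shows "finite M \<Longrightarrow> M \<subseteq> E \<Longrightarrow> (\<forall>e\<in>M. \<forall>f\<in>M. e \<noteq> f \<longrightarrow> e \<inter> f = {}) \<Longrightarrow>
    \<exists>p. p permutes {0..<N} \<and> (\<forall>i. p (p i) = i) \<and> mpp N p = M \<and> (\<forall>i\<in>NFp N p. {i, p i} \<in> E)
     \<and> of_int (sign p) * (\<Prod>i\<in>NFp N p. a i (p i)) = (\<Prod>e\<in>M. \<omega> e)
     \<and> card (NFp N p) = 2 * card M"
proof (induction M rule: finite_induct)
  case empty
  have "(\<lambda>x. x) permutes {0..<N}" using permutes_id[of "{0..<N}"] unfolding id_def .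
  then show ?case
    by (intro exI[of _ "\<lambda>x. x"]) (auto simp: NFp_def mpp_def)
next
  case (insert e M)
  then obtain p' where p': "p' permutes {0..<N}" "\<forall>i. p' (p' i) = i" "mpp N p' = M"
    "\<forall>i\<in>NFp N p'. {i, p' i} \<in> E"
    "of_int (sign p') * (\<Prod>i\<in>NFp N p'. a i (p' i)) = (\<Prod>e\<in>M. \<omega> e)"
    "card (NFp N p') = 2 * card M" by auto
  from insert have "e \<in> E" by auto
  then obtain u v where e: "e = {u, v}" "u < N" "v < N" "u \<noteq> v" using graph by blast
  have disj: "\<forall>f\<in>M. e \<inter> f = {}" using insert by auto
  have fu: "p' u = u"
  proof (rule ccontr)
    assume "p' u \<noteq> u"
    then have "u \<in> NFp N p'" using e by (auto simp: NFp_def)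
    then have "{u, p' u} \<in> M" using p'(3) by (auto simp: mpp_def)
    then show False using disj e by auto
  qed
  have fv: "p' v = v"
  proof (rule ccontr)
    assume "p' v \<noteq> v"
    then have "v \<in> NFp N p'" using e by (auto simp: NFp_def)
    then have "{v, p' v} \<in> M" using p'(3) by (auto simp: mpp_def)
    then show False using disj e by auto
  qed
  define p where "p = Transposition.transpose u v \<circ> p'"
  have pu: "p u = v" and pv: "p v = u" using fu fv by (auto simp: p_def)
  have po: "p i = p' i" if "i \<noteq> u" "i \<noteq> v" for i
  proof -
    have "p' i \<noteq> u" using that p'(2) fu by metis
    moreover have "p' i \<noteq> v" using that p'(2) fv by metis
    ultimately show ?thesis by (simp add: p_def transpose_def)
  qed
  have perm: "p permutes {0..<N}" unfolding p_def
    using p'(1) e by (intro permutes_compose permutes_swap_id) auto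
  have inv: "\<forall>i. p (p i) = i"
  proof
    fix i show "p (p i) = i"
    proof (cases "i = u \<or> i = v")
      case True then show ?thesis using pu pv by auto
    next
      case False
      have "p' i \<noteq> u" using False p'(2) fu by metis
      moreover have "p' i \<noteq> v" using False p'(2) fv by metis
      ultimately show ?thesis using po False p'(2) by auto
    qed
  qed
  have uvn: "u \<notin> NFp N p'" "v \<notin> NFp N p'" using fu fv by (auto simp: NFp_def)
  have NF: "NFp N p = insert u (insert v (NFp N p'))"
    unfolding set_eq_iff
  proof
    fix i show "i \<in> NFp N p \<longleftrightarrow> i \<in> insert u (insert v (NFp N p'))"
      using e pu pv po[of i] fu fv by (cases "i = u"; cases "i = v") (auto simp: NFp_def)
  qed
  have fin: "finite (NFp N p')" by (auto simp: NFp_def)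
  have mp: "mpp N p = insert e M"
  proof -
    have "mpp N p = insert {u, p u} (insert {v, p v} ((\<lambda>i. {i, p i}) ` NFp N p'))"
      unfolding mpp_def NF by simp
    also have "(\<lambda>i. {i, p i}) ` NFp N p' = (\<lambda>i. {i, p' i}) ` NFp N p'"
    proof (intro image_cong refl)
      fix i assume "i \<in> NFp N p'"
      then have "i \<noteq> u" "i \<noteq> v" using uvn by auto
      then show "{i, p i} = {i, p' i}" using po by simp
    qed
    finally show ?thesis using pu pv e p'(3) by (auto simp: mpp_def)
  qed
  have edges: "\<forall>i\<in>NFp N p. {i, p i} \<in> E"
  proof
    fix i assume i: "i \<in> NFp N p"
    show "{i, p i} \<in> E"
    proof (cases "i = u \<or> i = v")
      case True then show ?thesis using pu pv e \<open>e \<in> E\<close> by (auto simp: insert_commute)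
    next
      case False then show ?thesis using i NF p'(4) po by auto
    qed
  qed
  have sgn: "sign p = - sign p'"
    unfolding p_def using e p'(1)
    by (simp add: sign_compose permutation_swap_id permutes_imp_permutation[OF _ p'(1)] sign_swap_id)
  have prodp: "(\<Prod>i\<in>NFp N p. a i (p i)) = a u v * a v u * (\<Prod>i\<in>NFp N p'. a i (p' i))"
  proof -
    have "(\<Prod>i\<in>NFp N p. a i (p i)) = a u (p u) * (a v (p v) * (\<Prod>i\<in>NFp N p'. a i (p i)))"
      unfolding NF using uvn fin e by simp
    also have "(\<Prod>i\<in>NFp N p'. a i (p i)) = (\<Prod>i\<in>NFp N p'. a i (p' i))"
    proof (intro prod.cong refl)
      fix i assume "i \<in> NFp N p'"
      then have "i \<noteq> u" "i \<noteq> v" using uvn by auto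
      then show "a i (p i) = a i (p' i)" using po by simp
    qed
    finally show ?thesis using pu pv by simp
  qed
  have w: "a u v * a v u = - \<omega> e"
    using edge_prod[OF weight_pos skew entries e(2,3,4)] e \<open>e \<in> E\<close> by simp
  have "of_int (sign p) * (\<Prod>i\<in>NFp N p. a i (p i)) = \<omega> e * (\<Prod>e\<in>M. \<omega> e)"
    using sgn prodp w p'(5) by (simp add: algebra_simps)
  also have "\<dots> = (\<Prod>e\<in>insert e M. \<omega> e)" using insert by simp
  finally have val: "of_int (sign p) * (\<Prod>i\<in>NFp N p. a i (p i)) = (\<Prod>e\<in>insert e M. \<omega> e)" .
  have "card (NFp N p) = 2 * card (insert e M)"
    using NF uvn fin p'(6) e insert by simp
  then show ?case using perm inv mp edges val by blast
qed

lemma mpp_inj: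
  assumes p: "p permutes {0..<N}" "\<forall>i. p (p i) = i"
    and q: "q permutes {0..<N}" "\<forall>i. q (q i) = i"
    and eq: "mpp N p = mpp N q"
  shows "p = q"
proof -
  have key: "q i = p i" if p: "p permutes {0..<N}" "\<forall>i. p (p i) = i"
    and q: "q permutes {0..<N}" "\<forall>i. q (q i) = i"
    and eq: "mpp N p = mpp N q" and i: "i < N" "p i \<noteq> i" for p q i
  proof -
    have "{i, p i} \<in> mpp N q" using eq i by (auto simp: mpp_def NFp_def)
    then obtain j where j: "j \<in> NFp N q" "{i, p i} = {j, q j}" by (auto simp: mpp_def)
    then have "(j = i \<and> q j = p i) \<or> (j = p i \<and> q j = i)" using i by (auto simp: doubleton_eq_iff)
    then show ?thesis using q(2) by metis
  qed
  show ?thesis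
  proof
    fix i show "p i = q i"
    proof (cases "i < N")
      case False
      then show ?thesis using permutes_not_in[OF p(1)] permutes_not_in[OF q(1)] by auto
    next
      case True
      show ?thesis
      proof (cases "p i = i")
        case False then show ?thesis using key[OF p q eq True] by simp
      next
        case pi: True
        show ?thesis
        proof (rule ccontr)
          assume "p i \<noteq> q i"
          then have "q i \<noteq> i" using pi by simp
          then have "p i = q i" using key[OF q p eq[symmetric] True] by simp
          then show False using \<open>p i \<noteq> q i\<close> by simp
        qed
      qed
    qed
  qed
qed

lemma mpp_matching:
  assumes "\<forall>i. p (p i) = i" "\<forall>i\<in>NFp N p. {i, p i} \<in> E"
  shows "mpp N p \<subseteq> E \<and> (\<forall>e\<in>mpp N p. \<forall>f\<in>mpp N p. e \<noteq> f \<longrightarrow> e \<inter> f = {})"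
proof
  show "mpp N p \<subseteq> E" using assms by (auto simp: mpp_def)
  show "\<forall>e\<in>mpp N p. \<forall>f\<in>mpp N p. e \<noteq> f \<longrightarrow> e \<inter> f = {}"
  proof (intro ballI impI)
    fix e f assume e: "e \<in> mpp N p" and f: "f \<in> mpp N p" and ne: "e \<noteq> f"
    from e obtain i where i: "e = {i, p i}" by (auto simp: mpp_def)
    from f obtain j where j: "f = {j, p j}" by (auto simp: mpp_def)
    show "e \<inter> f = {}"
    proof (rule ccontr)
      assume "e \<inter> f \<noteq> {}"
      then have "i = j \<or> i = p j \<or> p i = j \<or> p i = p j" using i j by auto
      then have "e = f" using i j assms(1) by (metis insert_commute)
      then show False using ne by simp
    qed
  qed
qed

lemma sqrt_pow_split:
  fixes t :: real
  assumes t: "t \<ge> 0" and k: "k \<le> N div 2"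
  shows "sqrt t ^ (N - 2 * k) = (if even N then t ^ (N div 2 - k) else sqrt t * t ^ (N div 2 - k))"
proof -
  have "N - 2 * k = 2 * (N div 2 - k) + N mod 2" using k div_mult_mod_eq[of N 2] by linarith
  then have "sqrt t ^ (N - 2 * k) = (sqrt t ^ 2) ^ (N div 2 - k) * sqrt t ^ (N mod 2)"
    by (simp add: power_add power_mult)
  also have "sqrt t ^ 2 = t" using t by simp
  finally show ?thesis by (cases "even N") (auto simp: odd_iff_mod_2_eq_one)
qed

lemma comb:
  fixes a :: "nat \<Rightarrow> nat \<Rightarrow> real"
  assumes graph: "E \<subseteq> {{i, j} | i j. i < N \<and> j < N \<and> i \<noteq> j}"
    and weight_pos: "\<forall>e\<in>E. \<omega> e > 0"
    and skew: "\<forall>i<N. \<forall>j<N. a j i = - a i j"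
    and entries: "\<forall>i<N. \<forall>j<N. i < j \<and> {i, j} \<in> E \<longrightarrow> a i j = sqrt (\<omega> {i, j})"
    and t: "t \<ge> 0"
  shows "(\<Sum>p\<in>{p. p permutes {0..<N} \<and> (\<forall>i. p (p i) = i) \<and> (\<forall>i\<in>NFp N p. {i, p i} \<in> E)}.
      of_int (sign p) * (\<Prod>i\<in>NFp N p. a i (p i)) * sqrt t ^ (N - card (NFp N p)))
    = (if even N then Phi_match t N E \<omega> else sqrt t * Phi_match t N E \<omega>)"
proof -
  define S where "S = {p. p permutes {0..<N} \<and> (\<forall>i. p (p i) = i) \<and> (\<forall>i\<in>NFp N p. {i, p i} \<in> E)}"
  define f where "f p = of_int (sign p) * (\<Prod>i\<in>NFp N p. a i (p i)) * sqrt t ^ (N - card (NFp N p))" for p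
  define Match where "Match = {M. M \<subseteq> E \<and> (\<forall>e\<in>M. \<forall>f\<in>M. e \<noteq> f \<longrightarrow> e \<inter> f = {})}"
  define g where "g M = sqrt t ^ (N - 2 * card M) * (\<Prod>e\<in>M. \<omega> e)" for M
  note mp = match_perm[OF graph weight_pos skew entries]
  have finE: "finite E"
    by (rule finite_subset[of _ "Pow {0..<N}"]) (use graph in auto)
  have inj: "inj_on (mpp N) S" using mpp_inj by (auto simp: inj_on_def S_def)
  have img: "mpp N ` S = Match"
  proof
    show "mpp N ` S \<subseteq> Match"
    proof
      fix M assume "M \<in> mpp N ` S"
      then obtain p where "p \<in> S" "M = mpp N p" by auto
      then show "M \<in> Match" using mpp_matching[of p N E] by (simp add: S_def Match_def)
    qed
    show "Match \<subseteq> mpp N ` S"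
    proof
      fix M assume M: "M \<in> Match"
      then have "finite M" using finE by (auto simp: Match_def intro: finite_subset)
      moreover have "M \<subseteq> E" "\<forall>e\<in>M. \<forall>f\<in>M. e \<noteq> f \<longrightarrow> e \<inter> f = {}"
        using M by (auto simp: Match_def)
      ultimately obtain p where "p permutes {0..<N}" "\<forall>i. p (p i) = i" "mpp N p = M" "\<forall>i\<in>NFp N p. {i, p i} \<in> E"
        using mp by metis
      then show "M \<in> mpp N ` S" by (auto simp: S_def)
    qed
  qed
  have val: "f p = g (mpp N p)" if p: "p \<in> S" for p
  proof -
    have fin: "finite (mpp N p)" by (auto simp: mpp_def NFp_def)
    have mm: "mpp N p \<subseteq> E \<and> (\<forall>e\<in>mpp N p. \<forall>f\<in>mpp N p. e \<noteq> f \<longrightarrow> e \<inter> f = {})"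
      using mpp_matching[of p N E] p by (simp add: S_def)
    from mp[OF fin conjunct1[OF mm] conjunct2[OF mm]] obtain p' where p': "p' permutes {0..<N}" "\<forall>i. p' (p' i) = i" "mpp N p' = mpp N p"
      "of_int (sign p') * (\<Prod>i\<in>NFp N p'. a i (p' i)) = (\<Prod>e\<in>mpp N p. \<omega> e)"
      "card (NFp N p') = 2 * card (mpp N p)"
      by blast
    have "p' = p" using mpp_inj[OF p'(1,2)] p p'(3) by (auto simp: S_def)
    then show ?thesis using p' by (simp add: f_def g_def)
  qed
  have "sum f S = sum g Match"
  proof -
    have "sum g Match = sum (g \<circ> mpp N) S" using img sum.reindex[OF inj, of g] by simp
    also have "\<dots> = sum f S" using val by (intro sum.cong) auto
    finally show ?thesis by simp
  qed
  also have "Match = (\<Union>k\<in>{0..N div 2}. matchings E k)"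
  proof
    show "Match \<subseteq> (\<Union>k\<in>{0..N div 2}. matchings E k)"
    proof
      fix M assume M: "M \<in> Match"
      then have "finite M" using finE by (auto simp: Match_def intro: finite_subset)
      moreover have "M \<subseteq> E" "\<forall>e\<in>M. \<forall>f\<in>M. e \<noteq> f \<longrightarrow> e \<inter> f = {}"
        using M by (auto simp: Match_def)
      ultimately obtain p where "card (NFp N p) = 2 * card M"
        using mp by metis
      moreover have "card (NFp N p) \<le> N"
      proof -
        have "NFp N p \<subseteq> {0..<N}" by (auto simp: NFp_def)
        then have "card (NFp N p) \<le> card {0..<N}" by (intro card_mono) auto
        then show ?thesis by simp
      qed
      ultimately have "card M \<le> N div 2" by simp
      then show "M \<in> (\<Union>k\<in>{0..N div 2}. matchings E k)" using M
        by (auto simp: Match_def matchings_def)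
    qed
    show "(\<Union>k\<in>{0..N div 2}. matchings E k) \<subseteq> Match"
      by (auto simp: Match_def matchings_def)
  qed
  also have "sum g (\<Union>k\<in>{0..N div 2}. matchings E k) = (\<Sum>k=0..N div 2. sum g (matchings E k))"
  proof (rule sum.UNION_disjoint)
    show "\<forall>i\<in>{0..N div 2}. finite (matchings E i)"
      using finE by (auto simp: matchings_def intro: finite_subset[of _ "Pow E"])
    show "\<forall>i\<in>{0..N div 2}. \<forall>j\<in>{0..N div 2}. i \<noteq> j \<longrightarrow> matchings E i \<inter> matchings E j = {}"
      by (auto simp: matchings_def)
  qed simp
  also have "\<dots> = (\<Sum>k=0..N div 2. sqrt t ^ (N - 2 * k) * phi_match k E \<omega>)"
  proof (intro sum.cong refl)
    fix k assume k: "k \<in> {0..N div 2}"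
    show "sum g (matchings E k) = sqrt t ^ (N - 2 * k) * phi_match k E \<omega>"
    proof (cases "k = 0")
      case True
      have "matchings E 0 = {{}}"
      proof -
        have "M = {}" if "M \<in> matchings E 0" for M
        proof -
          from that have "M \<subseteq> E" "card M = 0" by (auto simp: matchings_def)
          moreover then have "finite M" using finE finite_subset by blast
          ultimately show ?thesis by simp
        qed
        moreover have "{} \<in> matchings E 0" by (simp add: matchings_def)
        ultimately show ?thesis by blast
      qed
      then show ?thesis using True by (simp add: g_def phi_match_def)
    next
      case False
      have "sum g (matchings E k) = (\<Sum>M\<in>matchings E k. sqrt t ^ (N - 2 * k) * (\<Prod>e\<in>M. \<omega> e))"
        by (intro sum.cong refl) (auto simp: g_def matchings_def)
      then show ?thesis using False by (simp add: phi_match_def sum_distrib_left)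
    qed
  qed
  also have "\<dots> = (if even N then Phi_match t N E \<omega> else sqrt t * Phi_match t N E \<omega>)"
  proof -
    have "(\<Sum>k=0..N div 2. sqrt t ^ (N - 2 * k) * phi_match k E \<omega>)
       = (\<Sum>k=0..N div 2. (if even N then 1 else sqrt t) * (phi_match k E \<omega> * t ^ (N div 2 - k)))"
      by (intro sum.cong refl) (simp add: sqrt_pow_split[OF t])
    then show ?thesis unfolding Phi_match_def by (simp add: sum_distrib_left[symmetric])
  qed
  finally show ?thesis unfolding S_def f_def .
qed

lemma (in prob_space) moment:
  fixes X :: "nat \<Rightarrow> nat \<Rightarrow> 'a \<Rightarrow> real"
  assumes indep: "indep_vars (\<lambda>_. borel) (\<lambda>(i, j). X i j) {(i, j). i \<le> j \<and> j < N}"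
    and int1: "\<forall>i j. i \<le> j \<and> j < N \<longrightarrow> integrable M (X i j)"
    and int2: "\<forall>i j. i \<le> j \<and> j < N \<longrightarrow> integrable M (\<lambda>s. (X i j s)\<^sup>2)"
    and mean0: "\<forall>i j. i \<le> j \<and> j < N \<longrightarrow> expectation (X i j) = 0"
    and var1: "\<forall>i j. i \<le> j \<and> j < N \<longrightarrow> expectation (\<lambda>s. (X i j s)\<^sup>2) = 1"
    and p: "p permutes {0..<N}"
  shows "integrable M (\<lambda>s. \<Prod>i\<in>NFp N p. X (min i (p i)) (max i (p i)) s) \<and>
    expectation (\<lambda>s. \<Prod>i\<in>NFp N p. X (min i (p i)) (max i (p i)) s)
      = (if \<forall>i\<in>NFp N p. p (p i) = i then 1 else 0)"
proof -
  define e where "e i = (min i (p i), max i (p i))" for i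
  define NF where "NF = NFp N p"
  define Q where "Q = e ` NF"
  define c where "c q = card {i\<in>NF. e i = q}" for q
  define X' where "X' = (\<lambda>(i, j). X i j)"
  define I where "I = {(i, j). i \<le> j \<and> j < N}"
  have finNF: "finite NF" by (auto simp: NF_def NFp_def)
  have pN: "p i < N" if "i < N" for i using p that by (meson atLeastLessThan_iff permutes_in_image zero_le)
  have QI: "Q \<subseteq> I" using pN by (auto simp: Q_def I_def e_def NF_def NFp_def)
  have Si: "{j\<in>NF. e j = e i} \<subseteq> {i, p i}" "i \<in> {j\<in>NF. e j = e i}" if i: "i \<in> NF" for i
  proof -
    show "i \<in> {j\<in>NF. e j = e i}" using i by simp
    show "{j\<in>NF. e j = e i} \<subseteq> {i, p i}"
    proof
      fix j assume "j \<in> {j\<in>NF. e j = e i}"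
      then have "min j (p j) = min i (p i)" "max j (p j) = max i (p i)" by (auto simp: e_def)
      then show "j \<in> {i, p i}" by (cases "j \<le> p j"; cases "i \<le> p i") auto
    qed
  qed
  have Sinv: "{j\<in>NF. e j = e i} = {i, p i}" if i: "i \<in> NF" and inv: "p (p i) = i" for i
  proof
    show "{j\<in>NF. e j = e i} \<subseteq> {i, p i}" using Si[OF i] by simp
    have "p i \<in> NF" using i inv pN by (auto simp: NF_def NFp_def)
    moreover have "e (p i) = e i" using inv by (auto simp: e_def)
    ultimately show "{i, p i} \<subseteq> {j\<in>NF. e j = e i}" using i by auto
  qed
  have Snon: "{j\<in>NF. e j = e i} = {i}" if i: "i \<in> NF" and ninv: "p (p i) \<noteq> i" for i
  proof
    show "{i} \<subseteq> {j\<in>NF. e j = e i}" using i by simp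
    show "{j\<in>NF. e j = e i} \<subseteq> {i}"
    proof
      fix j assume j: "j \<in> {j\<in>NF. e j = e i}"
      then have "min j (p j) = min i (p i)" "max j (p j) = max i (p i)" by (auto simp: e_def)
      moreover have "j \<in> {i, p i}" using Si[OF i] j by blast
      ultimately show "j \<in> {i}" using ninv by (cases "j \<le> p j"; cases "i \<le> p i") auto
    qed
  qed
  have ipi: "i \<noteq> p i" if "i \<in> NF" for i using that by (auto simp: NF_def NFp_def)
  have c12: "c q = 1 \<or> c q = 2" if q: "q \<in> Q" for q
  proof -
    from q obtain i where i: "i \<in> NF" "q = e i" by (auto simp: Q_def)
    show ?thesis
    proof (cases "p (p i) = i")
      case True then show ?thesis using Sinv[OF i(1)] ipi[OF i(1)] i by (simp add: c_def)
    next
      case False then show ?thesis using Snon[OF i(1)] i by (simp add: c_def)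
    qed
  qed
  have prodeq: "(\<Prod>i\<in>NF. X (min i (p i)) (max i (p i)) s) = (\<Prod>q\<in>Q. X' q s ^ c q)" for s
  proof -
    have "(\<Prod>i\<in>NF. X (min i (p i)) (max i (p i)) s) = (\<Prod>i\<in>NF. X' (e i) s)"
      by (simp add: X'_def e_def)
    also have "\<dots> = (\<Prod>q\<in>Q. \<Prod>i\<in>{i\<in>NF. e i = q}. X' (e i) s)"
      unfolding Q_def by (rule prod.image_gen[OF finNF])
    also have "\<dots> = (\<Prod>q\<in>Q. X' q s ^ c q)"
    proof (intro prod.cong refl)
      fix q assume "q \<in> Q"
      have "(\<Prod>i\<in>{i\<in>NF. e i = q}. X' (e i) s) = (\<Prod>i\<in>{i\<in>NF. e i = q}. X' q s)"
        by (intro prod.cong refl) simp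
      then show "(\<Prod>i\<in>{i\<in>NF. e i = q}. X' (e i) s) = X' q s ^ c q" by (simp add: c_def)
    qed
    finally show ?thesis .
  qed
  have indQ: "indep_vars (\<lambda>_. borel) (\<lambda>q s. X' q s ^ c q) Q"
  proof -
    have "indep_vars (\<lambda>_. borel) X' Q" using indep_vars_subset[OF indep[folded X'_def I_def] QI] .
    then show ?thesis by (rule indep_vars_compose2) measurable
  qed
  have finQ: "finite Q" using finNF by (simp add: Q_def)
  have intq: "integrable M (\<lambda>s. X' q s ^ c q) \<and> expectation (\<lambda>s. X' q s ^ c q) = (if c q = 2 then 1 else 0)"
    if q: "q \<in> Q" for q
  proof -
    obtain u v where uv: "q = (u, v)" "u \<le> v" "v < N" using QI q by (auto simp: I_def)
    show ?thesis
    proof (cases "c q = 1")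
      case True then show ?thesis using uv int1 mean0 by (simp add: X'_def)
    next
      case False then have "c q = 2" using c12[OF q] by simp
      then show ?thesis using uv int2 var1 by (simp add: X'_def)
    qed
  qed
  have int: "integrable M (\<lambda>s. \<Prod>q\<in>Q. X' q s ^ c q)"
    by (rule indep_vars_integrable[OF finQ indQ]) (use intq in blast)
  have ex: "expectation (\<lambda>s. \<Prod>q\<in>Q. X' q s ^ c q) = (\<Prod>q\<in>Q. expectation (\<lambda>s. X' q s ^ c q))"
    by (rule indep_vars_lebesgue_integral[OF finQ indQ]) (use intq in blast)
  have val: "(\<Prod>q\<in>Q. expectation (\<lambda>s. X' q s ^ c q)) = (if \<forall>i\<in>NF. p (p i) = i then 1 else 0)"
  proof (cases "\<forall>i\<in>NF. p (p i) = i")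
    case True
    have "c q = 2" if "q \<in> Q" for q
    proof -
      from that obtain i where i: "i \<in> NF" "q = e i" by (auto simp: Q_def)
      then show ?thesis using Sinv[OF i(1)] True ipi[OF i(1)] by (simp add: c_def)
    qed
    then show ?thesis using True intq by simp
  next
    case False
    then obtain i where i: "i \<in> NF" "p (p i) \<noteq> i" by blast
    have "e i \<in> Q" using i by (simp add: Q_def)
    moreover have "c (e i) = 1" using Snon[OF i] by (simp add: c_def)
    ultimately have "expectation (\<lambda>s. X' (e i) s ^ c (e i)) = 0" using intq[of "e i"] by simp
    then have "(\<Prod>q\<in>Q. expectation (\<lambda>s. X' q s ^ c q)) = 0"
      using \<open>e i \<in> Q\<close> finQ by (metis prod_zero_iff)
    then show ?thesis using False by simp
  qed
  show ?thesis using int ex val prodeq unfolding NF_def by simp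
qed

lemma det_expand:
  fixes a :: "nat \<Rightarrow> nat \<Rightarrow> real" and X :: "nat \<Rightarrow> nat \<Rightarrow> 's \<Rightarrow> real"
  assumes skew: "\<forall>i<N. \<forall>j<N. a j i = - a i j"
  shows "Determinant.det (mat N N (\<lambda>(i, j).
            (if i = j then sqrt t else 0) + a i j * X (min i j) (max i j) s))
    = (\<Sum>p\<in>{p. p permutes {0..<N}}. (of_int (sign p) * (\<Prod>i\<in>NFp N p. a i (p i)) * sqrt t ^ (N - card (NFp N p)))
         * (\<Prod>i\<in>NFp N p. X (min i (p i)) (max i (p i)) s))"
proof -
  have aii: "a i i = 0" if "i < N" for i
  proof -
    have "a i i = - a i i" using skew that by blast
    then show ?thesis by simp
  qed
  let ?A = "mat N N (\<lambda>(i, j). (if i = j then sqrt t else 0) + a i j * X (min i j) (max i j) s)"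
  have "?A \<in> carrier_mat N N" by simp
  note dd = det_def'[OF this]
  show ?thesis unfolding dd
  proof (intro sum.cong refl)
    fix p assume "p \<in> {p. p permutes {0..<N}}"
    then have p: "p permutes {0..<N}" by simp
    have pN: "p i < N" if "i < N" for i using p that by (meson atLeastLessThan_iff permutes_in_image zero_le)
    define Fx where "Fx = {i. i < N \<and> p i = i}"
    have U: "{0..<N} = NFp N p \<union> Fx" by (auto simp: Fx_def NFp_def)
    have D: "NFp N p \<inter> Fx = {}" by (auto simp: Fx_def NFp_def)
    have fin: "finite (NFp N p)" "finite Fx" by (auto simp: Fx_def NFp_def)
    have cardFx: "card Fx = N - card (NFp N p)"
    proof -
      have "card (NFp N p \<union> Fx) = N" by (subst U[symmetric]) simp
      then show ?thesis using card_Un_disjoint[OF fin D] by simp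
    qed
    have "(\<Prod>i = 0..<N. ?A $$ (i, p i)) = (\<Prod>i\<in>NFp N p. ?A $$ (i, p i)) * (\<Prod>i\<in>Fx. ?A $$ (i, p i))"
      unfolding U by (rule prod.union_disjoint[OF fin D])
    also have "(\<Prod>i\<in>Fx. ?A $$ (i, p i)) = (\<Prod>i\<in>Fx. sqrt t)"
      by (intro prod.cong refl) (auto simp: Fx_def aii)
    also have "\<dots> = sqrt t ^ (N - card (NFp N p))" using cardFx by simp
    also have "(\<Prod>i\<in>NFp N p. ?A $$ (i, p i)) = (\<Prod>i\<in>NFp N p. a i (p i) * X (min i (p i)) (max i (p i)) s)"
      by (intro prod.cong refl) (auto simp: NFp_def pN)
    also have "\<dots> = (\<Prod>i\<in>NFp N p. a i (p i)) * (\<Prod>i\<in>NFp N p. X (min i (p i)) (max i (p i)) s)"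
      by (rule prod.distrib)
    finally show "of_int (sign p) * (\<Prod>i = 0..<N. ?A $$ (i, p i)) =
      (of_int (sign p) * (\<Prod>i\<in>NFp N p. a i (p i)) * sqrt t ^ (N - card (NFp N p)))
         * (\<Prod>i\<in>NFp N p. X (min i (p i)) (max i (p i)) s)" by simp
  qed
qed

theorem lemma2p1:
  fixes N :: nat and E :: "nat set set" and \<omega> :: "nat set \<Rightarrow> real"
    and a :: "nat \<Rightarrow> nat \<Rightarrow> real"
    and M :: "'s measure" and X :: "nat \<Rightarrow> nat \<Rightarrow> 's \<Rightarrow> real" and t :: real
  assumes graph: "E \<subseteq> {{i, j} | i j. i < N \<and> j < N \<and> i \<noteq> j}"
    and weight_pos: "\<forall>e\<in>E. \<omega> e > 0"
    and skew: "\<forall>i<N. \<forall>j<N. a j i = - a i j"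
    and support: "\<forall>i<N. \<forall>j<N. (a i j \<noteq> 0 \<longleftrightarrow> {i, j} \<in> E)"
    and entries: "\<forall>i<N. \<forall>j<N. i < j \<and> {i, j} \<in> E \<longrightarrow> a i j = sqrt (\<omega> {i, j})"
    and prob: "prob_space M"
    and rv: "\<forall>i j. i \<le> j \<and> j < N \<longrightarrow> X i j \<in> borel_measurable M"
    and indep: "prob_space.indep_vars M (\<lambda>_. borel) (\<lambda>(i, j). X i j) {(i, j). i \<le> j \<and> j < N}"
    and int1: "\<forall>i j. i \<le> j \<and> j < N \<longrightarrow> integrable M (X i j)"
    and int2: "\<forall>i j. i \<le> j \<and> j < N \<longrightarrow> integrable M (\<lambda>s. (X i j s)\<^sup>2)"
    and mean0: "\<forall>i j. i \<le> j \<and> j < N \<longrightarrow> prob_space.expectation M (X i j) = 0"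
    and var1: "\<forall>i j. i \<le> j \<and> j < N \<longrightarrow> prob_space.expectation M (\<lambda>s. (X i j s)\<^sup>2) = 1"
    and t: "t \<ge> 0"
  shows "prob_space.expectation M (\<lambda>s. Determinant.det (mat N N (\<lambda>(i, j).
            (if i = j then sqrt t else 0) + a i j * X (min i j) (max i j) s)))
         = (if even N then Phi_match t N E \<omega> else sqrt t * Phi_match t N E \<omega>)"
proof -
  interpret prob_space M by (rule prob)
  define P where "P = {p. p permutes {0..<N}}"
  define C where "C p = of_int (sign p) * (\<Prod>i\<in>NFp N p. a i (p i)) * sqrt t ^ (N - card (NFp N p))" for p
  define Pi where "Pi = (\<lambda>p s. \<Prod>i\<in>NFp N p. X (min i (p i)) (max i (p i)) s)"
  have finP: "finite P" unfolding P_def by (rule finite_permutations) simp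
  note mom = moment[OF indep int1 int2 mean0 var1]
  have "expectation (\<lambda>s. Determinant.det (mat N N (\<lambda>(i, j).
            (if i = j then sqrt t else 0) + a i j * X (min i j) (max i j) s)))
      = expectation (\<lambda>s. \<Sum>p\<in>P. C p * Pi p s)"
  proof (rule arg_cong[where f = expectation], rule ext)
    fix s show "Determinant.det (mat N N (\<lambda>(i, j).
            (if i = j then sqrt t else 0) + a i j * X (min i j) (max i j) s)) = (\<Sum>p\<in>P. C p * Pi p s)"
      unfolding P_def C_def Pi_def by (rule det_expand[OF skew])
  qed
  also have "\<dots> = (\<Sum>p\<in>P. expectation (\<lambda>s. C p * Pi p s))"
  proof (rule Bochner_Integration.integral_sum[of P M "\<lambda>p s. C p * Pi p s"])
    fix p assume "p \<in> P"
    then have "integrable M (Pi p)" using conjunct1[OF mom[of p]] by (simp add: P_def Pi_def)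
    then show "integrable M (\<lambda>s. C p * Pi p s)" by (rule integrable_mult_right)
  qed
  also have "\<dots> = (\<Sum>p\<in>P. if \<forall>i\<in>NFp N p. p (p i) = i then C p else 0)"
  proof (intro sum.cong refl)
    fix p assume "p \<in> P"
    then have "expectation (Pi p) = (if \<forall>i\<in>NFp N p. p (p i) = i then 1 else 0)"
      using conjunct2[OF mom[of p]] by (simp add: P_def Pi_def)
    then show "expectation (\<lambda>s. C p * Pi p s) = (if \<forall>i\<in>NFp N p. p (p i) = i then C p else 0)"
      by (simp only: integral_mult_right_zero) simp
  qed
  also have "\<dots> = (\<Sum>p\<in>{p\<in>P. \<forall>i\<in>NFp N p. p (p i) = i}. C p)"
    by (rule sum.inter_filter[OF finP, symmetric])
  also have "\<dots> = (\<Sum>p\<in>{p. p permutes {0..<N} \<and> (\<forall>i. p (p i) = i) \<and> (\<forall>i\<in>NFp N p. {i, p i} \<in> E)}. C p)"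
  proof (rule sum.mono_neutral_right)
    show "finite {p\<in>P. \<forall>i\<in>NFp N p. p (p i) = i}" using finP by simp
    show "{p. p permutes {0..<N} \<and> (\<forall>i. p (p i) = i) \<and> (\<forall>i\<in>NFp N p. {i, p i} \<in> E)}
       \<subseteq> {p\<in>P. \<forall>i\<in>NFp N p. p (p i) = i}" by (auto simp: P_def)
    show "\<forall>p\<in>{p\<in>P. \<forall>i\<in>NFp N p. p (p i) = i} -
       {p. p permutes {0..<N} \<and> (\<forall>i. p (p i) = i) \<and> (\<forall>i\<in>NFp N p. {i, p i} \<in> E)}. C p = 0"
    proof
      fix p assume pm: "p \<in> {p\<in>P. \<forall>i\<in>NFp N p. p (p i) = i} -
       {p. p permutes {0..<N} \<and> (\<forall>i. p (p i) = i) \<and> (\<forall>i\<in>NFp N p. {i, p i} \<in> E)}"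
      then have p: "p permutes {0..<N}" and inv: "\<forall>i\<in>NFp N p. p (p i) = i" by (auto simp: P_def)
      have pN: "p i < N" if "i < N" for i using p that by (meson atLeastLessThan_iff permutes_in_image zero_le)
      have allinv: "\<forall>i. p (p i) = i"
      proof
        fix i show "p (p i) = i"
        proof (cases "i < N \<and> p i \<noteq> i")
          case True then show ?thesis using inv by (auto simp: NFp_def)
        next
          case False
          then have "p i = i" using permutes_not_in[OF p] by auto
          then show ?thesis by simp
        qed
      qed
      have "\<not> (\<forall>i\<in>NFp N p. {i, p i} \<in> E)" using pm p allinv by simp
      then obtain i where i: "i \<in> NFp N p" "{i, p i} \<notin> E" by blast
      have iN: "i < N" "p i < N" using i(1) pN by (auto simp: NFp_def)
      have a0: "a i (p i) = 0" using support iN i(2) by blast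
      have "finite (NFp N p)" by (simp add: NFp_def)
      then have "(\<Prod>i\<in>NFp N p. a i (p i)) = 0"
        by (rule prod_zero) (use i(1) a0 in blast)
      then show "C p = 0" by (simp add: C_def)
    qed
  qed
  also have "\<dots> = (if even N then Phi_match t N E \<omega> else sqrt t * Phi_match t N E \<omega>)"
    unfolding C_def by (rule comb[OF graph weight_pos skew entries t])
  finally show ?thesis .
qed

end
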